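(* Let $\mathbf{a}=(a_n)_{n\geq 1}$ be a strong divisibility sequence. Then for every non-negative integer $n$, \[\mathrm{lcm}\left\{\binom{n}{0}_{\mathbf{a}},\binom{n}{1}_{\mathbf{a}},\dots,\binom{n}{n}_{\mathbf{a}}\right\}=\frac{\mathrm{lcm}(a_1,a_2,\dots,a_n,a_{n+1})}{a_{n+1}}.\]
   Context: A strong divisibility sequence is a sequence of positive integers $(a_n)_{n\geq1}$ such that $\gcd(a_n,a_m)=a_{\gcd(n,m)}$ for all positive integers $n,m$. For integers $0\leq k\leq n$, the $\mathbf{a}$-binomial coefficient is $\binom{n}{k}_{\mathbf{a}}:=\frac{a_na_{n-1}\cdots a_{n-k+1}}{a_1a_2\cdots a_k}$ (empty products equal $1$); for a strong divisibility sequence these are positive integers. $\mathrm{lcm}$ denotes the least common positive multiple. *)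

theory Defs
  imports Main
begin

definition strong_div_seq :: "(nat \<Rightarrow> nat) \<Rightarrow> bool" where
  "strong_div_seq a \<longleftrightarrow> (\<forall>n\<ge>1. a n > 0) \<and>
     (\<forall>n\<ge>1. \<forall>m\<ge>1. gcd (a n) (a m) = a (gcd n m))"

text \<open>a-binomial coefficient: (a_n a_{n-1} ... a_{n-k+1}) / (a_1 ... a_k).
  For strong divisibility sequences the division is exact.\<close>
definition a_binom :: "(nat \<Rightarrow> nat) \<Rightarrow> nat \<Rightarrow> nat \<Rightarrow> nat" where
  "a_binom a n k = (\<Prod>i\<in>{n-k+1..n}. a i) div (\<Prod>i\<in>{1..k}. a i)"

end

theory Submission
  imports Defs "HOL-Computational_Algebra.Primes"
begin

lemma carry_decomp:
  fixes k n r :: nat assumes "k \<le> n"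
  shows "n div r = k div r + (n-k) div r + (k mod r + (n-k) mod r) div r"
  using div_add1_eq[of k "n-k" r] assms by simp

lemma carry_le1:
  fixes k n r :: nat assumes "k \<le> n" "r \<ge> 1"
  shows "n div r \<le> k div r + (n-k) div r + 1"
proof -
  have "k mod r < r" "(n-k) mod r < r" using assms by auto
  hence "k mod r + (n-k) mod r < r * 2" by linarith
  hence "(k mod r + (n-k) mod r) div r < 2" using assms
    by (simp add: div_less_iff_less_mult)
  thus ?thesis using carry_decomp[OF assms(1), of r] by simp
qed

lemma carry_ge:
  fixes k n r :: nat assumes "k \<le> n"
  shows "k div r + (n-k) div r \<le> n div r"
  using carry_decomp[OF assms, of r] by simp

lemma mod_r1:
  fixes n r :: nat assumes "r \<ge> 1"
  shows "r dvd n+1 \<longleftrightarrow> n mod r = r - 1"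
proof -
  have "(n+1) mod r = (if Suc (n mod r) = r then 0 else Suc (n mod r))"
    using mod_Suc[of n r] by simp
  moreover have "n mod r < r" using assms by simp
  ultimately show ?thesis by (auto simp: dvd_eq_mod_eq_0)
qed

lemma carry_dvd0:
  fixes k n r :: nat assumes "k \<le> n" "r \<ge> 1" "r dvd n+1"
  shows "n div r = k div r + (n-k) div r"
proof -
  define s where "s = k mod r + (n-k) mod r"
  have nm: "n mod r = s mod r" unfolding s_def using assms(1)
    by (metis le_add_diff_inverse mod_add_eq)
  have "n mod r = r - 1" using mod_r1 assms by blast
  have "k mod r < r" "(n-k) mod r < r" using assms by auto
  hence "s \<le> 2*r - 2" unfolding s_def by linarith
  have sd: "s = r * (s div r) + s mod r" by simp
  have "s < r"
  proof (rule ccontr)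
    assume "\<not> s < r"
    hence "s div r \<ge> 1" using assms(2) div_le_mono[of r s r] by simp
    moreover have "s div r < 2" using \<open>s \<le> 2*r - 2\<close> assms(2)
      by (simp add: div_less_iff_less_mult)
    ultimately have "s div r = 1" by simp
    hence "s mod r = s - r" using sd by simp
    thus False using \<open>n mod r = r - 1\<close> nm \<open>s \<le> 2*r - 2\<close> \<open>\<not> s < r\<close> assms(2) by linarith
  qed
  hence "s div r = 0" by simp
  thus ?thesis using carry_decomp[OF assms(1), of r] unfolding s_def by simp
qed

lemma carry_one:
  fixes k n r :: nat assumes "k \<le> n" "r \<ge> 1" "r dvd k+1" "\<not> r dvd n+1"
  shows "n div r = k div r + (n-k) div r + 1"
proof -
  define s where "s = k mod r + (n-k) mod r"
  have nm: "n mod r = s mod r" unfolding s_def using assms(1)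
    by (metis le_add_diff_inverse mod_add_eq)
  have km: "k mod r = r - 1" using mod_r1 assms by blast
  have nm1: "n mod r \<noteq> r - 1" using mod_r1 assms by blast
  have "k mod r < r" "(n-k) mod r < r" using assms by auto
  hence "s \<le> 2*r - 2" unfolding s_def by linarith
  have "(n-k) mod r \<noteq> 0"
  proof
    assume "(n-k) mod r = 0"
    hence "s = r - 1" unfolding s_def using km by simp
    hence "s mod r = r - 1" using assms(2) by simp
    thus False using nm nm1 by simp
  qed
  hence "s \<ge> r" unfolding s_def using km assms(2) by linarith
  hence "s div r \<ge> 1" using assms(2) div_le_mono[of r s r] by simp
  moreover have "s div r < 2" using \<open>s \<le> 2*r - 2\<close> assms(2)
    by (simp add: div_less_iff_less_mult)
  ultimately have "s div r = 1" by simp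
  thus ?thesis using carry_decomp[OF assms(1), of r] unfolding s_def by simp
qed

lemma count_dvd:
  fixes r x :: nat assumes "r \<ge> 1"
  shows "(\<Sum>i\<in>{1..x}. of_bool (r dvd i) :: nat) = x div r"
proof (induction x)
  case 0 thus ?case by simp
next
  case (Suc x)
  thus ?case by (simp add: sum.cl_ivl_Suc div_Suc dvd_eq_mod_eq_0)
qed

lemma count_le:
  fixes w N :: nat
  shows "(\<Sum>t\<in>{1..N}. of_bool (t \<le> w) :: nat) = min w N"
  by (induction N) (auto simp: sum.cl_ivl_Suc)

locale vseq =
  fixes v :: "nat \<Rightarrow> nat" and n :: nat
  assumes vg: "\<And>i j. i \<ge> 1 \<Longrightarrow> j \<ge> 1 \<Longrightarrow> v (gcd i j) = min (v i) (v j)"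
begin

lemma level: "\<exists>r\<ge>1. \<forall>i\<in>{1..n+1}. (t \<le> v i \<longleftrightarrow> r dvd i)"
proof (cases "{i\<in>{1..n+1}. t \<le> v i} = {}")
  case True
  show ?thesis
  proof (intro exI[of _ "n+2"] conjI ballI)
    fix i assume i: "i \<in> {1..n+1}"
    have "\<not> (n+2) dvd i" using i by (auto dest: dvd_imp_le)
    moreover have "\<not> t \<le> v i" using True i by auto
    ultimately show "t \<le> v i \<longleftrightarrow> (n+2) dvd i" by simp
  qed simp
next
  case False
  define R where "R = {i\<in>{1..n+1}. t \<le> v i}"
  define r where "r = Min R"
  have fin: "finite R" unfolding R_def by simp
  have "R \<noteq> {}" using False R_def by simp
  hence rR: "r \<in> R" unfolding r_def using fin Min_in by blast
  hence r1: "r \<ge> 1" "r \<le> n+1" "t \<le> v r" unfolding R_def by auto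
  show ?thesis
  proof (intro exI[of _ r] conjI ballI)
    show "r \<ge> 1" by (rule r1)
    fix i assume i: "i\<in>{1..n+1}"
    show "t \<le> v i \<longleftrightarrow> r dvd i"
    proof
      assume ti: "t \<le> v i"
      define g where "g = gcd i r"
      have g1: "g \<ge> 1" unfolding g_def using r1 by (simp add: Suc_le_eq)
      have "g \<le> r" unfolding g_def using r1 by (simp add: dvd_imp_le)
      have "v g = min (v i) (v r)" unfolding g_def using vg i r1 by simp
      hence "g \<in> R" unfolding R_def using g1 \<open>g \<le> r\<close> r1 ti by auto
      hence "r \<le> g" unfolding r_def using fin by simp
      hence "g = r" using \<open>g \<le> r\<close> by simp
      thus "r dvd i" unfolding g_def by (metis gcd_dvd1)
    next
      assume "r dvd i"
      hence "gcd i r = r" by (simp add: gcd_nat.absorb2)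
      hence "v r = min (v i) (v r)" using vg i r1 by (metis atLeastAtMost_iff)
      thus "t \<le> v i" using r1 by linarith
    qed
  qed
qed

definition rr :: "nat \<Rightarrow> nat" where
  "rr t = (SOME r. r \<ge> 1 \<and> (\<forall>i\<in>{1..n+1}. (t \<le> v i \<longleftrightarrow> r dvd i)))"

lemma rr: "rr t \<ge> 1" "\<And>i. i \<in> {1..n+1} \<Longrightarrow> (t \<le> v i \<longleftrightarrow> rr t dvd i)"
proof -
  have "rr t \<ge> 1 \<and> (\<forall>i\<in>{1..n+1}. (t \<le> v i \<longleftrightarrow> rr t dvd i))"
    unfolding rr_def using level[of t] by (rule someI_ex)
  thus "rr t \<ge> 1" "\<And>i. i \<in> {1..n+1} \<Longrightarrow> (t \<le> v i \<longleftrightarrow> rr t dvd i)" by auto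
qed

lemma nest:
  assumes "t \<le> t'" "rr t' \<le> n+1"
  shows "rr t dvd rr t'"
proof -
  have m: "rr t' \<in> {1..n+1}" using rr(1) assms by simp
  have "t' \<le> v (rr t')" using rr(2)[OF m] by simp
  hence "t \<le> v (rr t')" using assms by simp
  thus ?thesis using rr(2)[OF m] by simp
qed

definition NN :: nat where "NN = Max (v ` {1..n+1})"

lemma v_sum: "i \<in> {1..n+1} \<Longrightarrow> v i = (\<Sum>t\<in>{1..NN}. of_bool (rr t dvd i))"
proof -
  assume i: "i \<in> {1..n+1}"
  have "v i \<le> NN" unfolding NN_def using i by simp
  have "(\<Sum>t\<in>{1..NN}. of_bool (rr t dvd i)) = (\<Sum>t\<in>{1..NN}. of_bool (t \<le> v i) :: nat)"
    using rr(2)[OF i] by simp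
  also have "\<dots> = min (v i) NN" by (rule count_le)
  also have "\<dots> = v i" using \<open>v i \<le> NN\<close> by simp
  finally show ?thesis by simp
qed

lemma W_sum: "x \<le> n+1 \<Longrightarrow> (\<Sum>i\<in>{1..x}. v i) = (\<Sum>t\<in>{1..NN}. x div rr t)"
proof -
  assume x: "x \<le> n+1"
  have "(\<Sum>i\<in>{1..x}. v i) = (\<Sum>i\<in>{1..x}. \<Sum>t\<in>{1..NN}. of_bool (rr t dvd i))"
    using x v_sum by (intro sum.cong) auto
  also have "\<dots> = (\<Sum>t\<in>{1..NN}. \<Sum>i\<in>{1..x}. of_bool (rr t dvd i))"
    by (rule sum.swap)
  also have "\<dots> = (\<Sum>t\<in>{1..NN}. x div rr t)"
    using count_dvd rr(1) by simp
  finally show ?thesis .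
qed

definition cc :: "nat \<Rightarrow> nat \<Rightarrow> nat" where
  "cc k t = n div rr t - k div rr t - (n-k) div rr t"

lemma window:
  assumes "k \<le> n"
  shows "(\<Sum>i\<in>{n-k+1..n}. v i) = (\<Sum>i\<in>{1..k}. v i) + (\<Sum>t\<in>{1..NN}. cc k t)"
proof -
  have un: "{1..n} = {1..n-k} \<union> {n-k+1..n}" by auto
  have "(\<Sum>i\<in>{1..n}. v i) = (\<Sum>i\<in>{1..n-k}. v i) + (\<Sum>i\<in>{n-k+1..n}. v i)"
    unfolding un by (rule sum.union_disjoint) auto
  moreover have "(\<Sum>t\<in>{1..NN}. n div rr t) =
     (\<Sum>t\<in>{1..NN}. k div rr t) + (\<Sum>t\<in>{1..NN}. (n-k) div rr t) + (\<Sum>t\<in>{1..NN}. cc k t)"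
  proof -
    have "(\<Sum>t\<in>{1..NN}. n div rr t) = (\<Sum>t\<in>{1..NN}. k div rr t + (n-k) div rr t + cc k t)"
      using carry_ge[OF assms] unfolding cc_def by (intro sum.cong) (auto simp: le_add_diff_inverse)
    thus ?thesis by (simp add: sum.distrib)
  qed
  ultimately show ?thesis using W_sum[of n] W_sum[of k] W_sum[of "n-k"] assms by simp
qed

lemma cc_le1: "k \<le> n \<Longrightarrow> cc k t \<le> 1"
  unfolding cc_def using carry_le1[of k n "rr t"] rr(1)[of t] by linarith

lemma cc_dvd: "k \<le> n \<Longrightarrow> rr t dvd n+1 \<Longrightarrow> cc k t = 0"
  unfolding cc_def using carry_dvd0[of k n "rr t"] rr(1)[of t] by simp

lemma cc_big: "k \<le> n \<Longrightarrow> rr t > n \<Longrightarrow> cc k t = 0"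
  unfolding cc_def by simp

lemma cc_one: "k \<le> n \<Longrightarrow> rr t dvd k+1 \<Longrightarrow> \<not> rr t dvd n+1 \<Longrightarrow> cc k t = 1"
  unfolding cc_def using carry_one[of k n "rr t"] rr(1)[of t] by simp


lemma part_i:
  assumes k: "k \<le> n"
  shows "\<exists>m\<in>{1..n+1}. (\<Sum>t\<in>{1..NN}. cc k t) + v (n+1) \<le> v m"
proof -
  define f where "f t = cc k t + of_bool (rr t dvd n+1)" for t
  define T where "T = {t\<in>{1..NN}. f t \<ge> 1}"
  have n1: "n+1 \<in> {1..n+1}" by simp
  have sumf: "(\<Sum>t\<in>{1..NN}. cc k t) + v (n+1) = (\<Sum>t\<in>{1..NN}. f t)"
    unfolding f_def using v_sum[OF n1] by (simp add: sum.distrib)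
  have f1: "f t \<le> 1" for t
    using cc_le1[OF k, of t] cc_dvd[OF k, of t] unfolding f_def by auto
  have fT: "t \<in> T \<Longrightarrow> rr t \<le> n+1" for t
  proof -
    assume "t \<in> T"
    hence "cc k t \<ge> 1 \<or> rr t dvd n+1" unfolding T_def f_def by auto
    thus "rr t \<le> n+1"
    proof
      assume "cc k t \<ge> 1" thus ?thesis using cc_big[OF k, of t] by force
    qed (simp add: dvd_imp_le)
  qed
  show ?thesis
  proof (cases "T = {}")
    case True
    hence "(\<Sum>t\<in>{1..NN}. f t) = 0" unfolding T_def by (auto intro!: sum.neutral)
    thus ?thesis using sumf by (intro bexI[of _ 1]) auto
  next
    case False
    define ts where "ts = Max T"
    have finT: "finite T" unfolding T_def by simp
    have tsT: "ts \<in> T" unfolding ts_def using finT False by simp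
    define m where "m = rr ts"
    have m: "m \<in> {1..n+1}" unfolding m_def using fT[OF tsT] rr(1) by simp
    have "(\<Sum>t\<in>{1..NN}. f t) \<le> (\<Sum>t\<in>{1..NN}. of_bool (rr t dvd m))"
    proof (rule sum_mono)
      fix t assume t: "t \<in> {1..NN}"
      show "f t \<le> of_bool (rr t dvd m)"
      proof (cases "t \<in> T")
        case True
        hence "t \<le> ts" unfolding ts_def using finT by simp
        hence "rr t dvd m" unfolding m_def using nest fT[OF tsT] by simp
        thus ?thesis using f1[of t] by simp
      next
        case False
        thus ?thesis using t unfolding T_def by simp
      qed
    qed
    thus ?thesis using sumf v_sum[OF m] m by (intro bexI[of _ m]) auto
  qed
qed

lemma part_ii:
  assumes m: "m \<in> {1..n+1}"
  shows "\<exists>k\<le>n. v m \<le> v (n+1) + (\<Sum>t\<in>{1..NN}. cc k t)"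
proof -
  define T where "T = {t\<in>{1..NN}. rr t dvd m \<and> \<not> rr t dvd n+1}"
  have n1: "n+1 \<in> {1..n+1}" by simp
  have key: "v m \<le> v (n+1) + (\<Sum>t\<in>{1..NN}. cc k t)"
    if k: "k \<le> n" and h: "\<And>t. t \<in> T \<Longrightarrow> cc k t = 1" for k
  proof -
    have "(\<Sum>t\<in>{1..NN}. of_bool (rr t dvd m)) \<le>
          (\<Sum>t\<in>{1..NN}. of_bool (rr t dvd n+1) + cc k t)"
    proof (rule sum_mono)
      fix t assume t: "t \<in> {1..NN}"
      show "of_bool (rr t dvd m) \<le> of_bool (rr t dvd n+1) + cc k t"
      proof (cases "t \<in> T")
        case True thus ?thesis using h by simp
      next
        case False thus ?thesis using t unfolding T_def by auto
      qed
    qed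
    thus ?thesis using v_sum[OF m] v_sum[OF n1] by (simp add: sum.distrib)
  qed
  show ?thesis
  proof (cases "T = {}")
    case True
    thus ?thesis using key[of 0] by auto
  next
    case False
    define ts where "ts = Max T"
    have finT: "finite T" unfolding T_def by simp
    have tsT: "ts \<in> T" unfolding ts_def using finT False by simp
    have "rr ts dvd m" using tsT unfolding T_def by simp
    hence "rr ts \<le> m" using m by (simp add: dvd_imp_le)
    hence rts: "rr ts \<le> n+1" using m by simp
    define k where "k = rr ts - 1"
    have k: "k \<le> n" unfolding k_def using rts by simp
    have k1: "k + 1 = rr ts" unfolding k_def using rr(1)[of ts] by simp
    show ?thesis
    proof (intro exI conjI)
      show "k \<le> n" by (rule k)
      show "v m \<le> v (n+1) + (\<Sum>t\<in>{1..NN}. cc k t)"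
      proof (rule key[OF k])
        fix t assume t: "t \<in> T"
        hence "t \<le> ts" unfolding ts_def using finT by simp
        hence "rr t dvd k+1" using nest rts k1 by simp
        thus "cc k t = 1" using cc_one[OF k] t unfolding T_def by simp
      qed
    qed
  qed
qed

end


lemma vseq_I:
  assumes sds: "strong_div_seq a" and p: "prime (p::nat)"
  shows "vseq (\<lambda>i. multiplicity p (a i))"
proof
  fix i j :: nat assume ij: "i \<ge> 1" "j \<ge> 1"
  have "a (gcd i j) = gcd (a i) (a j)" using sds ij unfolding strong_div_seq_def by simp
  moreover have "a i \<noteq> 0" "a j \<noteq> 0" using sds ij unfolding strong_div_seq_def by auto
  ultimately show "multiplicity p (a (gcd i j)) = min (multiplicity p (a i)) (multiplicity p (a j))"
    using multiplicity_gcd[of "a i" "a j" p] p by simp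
qed


lemma mult_prod_a:
  assumes sds: "strong_div_seq a" and p: "prime (p::nat)" and A: "finite A" "\<And>i. i \<in> A \<Longrightarrow> i \<ge> 1"
  shows "multiplicity p (\<Prod>i\<in>A. a i) = (\<Sum>i\<in>A. multiplicity p (a i))"
proof (rule prime_elem_multiplicity_prod_distrib)
  show "prime_elem p" using p by (rule prime_imp_prime_elem)
  have "\<forall>i\<in>A. a i > 0" using sds A(2) unfolding strong_div_seq_def by blast
  thus "0 \<notin> a ` A" by auto
  show "finite A" by (rule A(1))
qed

lemma prod_a_ne0:
  assumes sds: "strong_div_seq a" and A: "\<And>i. i \<in> A \<Longrightarrow> i \<ge> 1"
  shows "(\<Prod>i\<in>A. a i) \<noteq> 0"
proof -
  have "\<forall>i\<in>A. a i > 0" using sds A unfolding strong_div_seq_def by blast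
  hence "(\<Prod>i\<in>A. a i) > 0" by (simp add: prod_pos)
  thus ?thesis by simp
qed

lemma binom_props:
  assumes sds: "strong_div_seq a" and k: "k \<le> n"
  shows "a_binom a n k \<noteq> 0"
    and "\<And>p. prime p \<Longrightarrow> multiplicity p (a_binom a n k) =
          (\<Sum>t\<in>{1..vseq.NN (\<lambda>i. multiplicity p (a i)) n}. vseq.cc (\<lambda>i. multiplicity p (a i)) n k t)"
proof -
  define Pw where "Pw = (\<Prod>i\<in>{n-k+1..n}. a i)"
  define Pk where "Pk = (\<Prod>i\<in>{1..k}. a i)"
  have Pw0: "Pw \<noteq> 0" unfolding Pw_def by (rule prod_a_ne0[OF sds]) auto
  have Pk0: "Pk \<noteq> 0" unfolding Pk_def by (rule prod_a_ne0[OF sds]) auto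
  have mw: "multiplicity p Pw = (\<Sum>i\<in>{n-k+1..n}. multiplicity p (a i))" if p: "prime p" for p
    unfolding Pw_def by (rule mult_prod_a[OF sds p]) auto
  have mk: "multiplicity p Pk = (\<Sum>i\<in>{1..k}. multiplicity p (a i))" if p: "prime p" for p
    unfolding Pk_def by (rule mult_prod_a[OF sds p]) auto
  have win: "(\<Sum>i\<in>{n-k+1..n}. multiplicity p (a i)) = (\<Sum>i\<in>{1..k}. multiplicity p (a i)) +
       (\<Sum>t\<in>{1..vseq.NN (\<lambda>i. multiplicity p (a i)) n}. vseq.cc (\<lambda>i. multiplicity p (a i)) n k t)"
    if p: "prime p" for p
    using vseq.window[OF vseq_I[OF sds p] k] .
  have dv: "Pk dvd Pw"
  proof (rule multiplicity_le_imp_dvd[OF Pk0])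
    fix p :: nat assume p: "prime p"
    show "multiplicity p Pk \<le> multiplicity p Pw" using mw[OF p] mk[OF p] win[OF p] by simp
  qed
  have eq: "Pw = Pk * a_binom a n k" unfolding a_binom_def Pw_def[symmetric] Pk_def[symmetric]
    using dv by simp
  thus "a_binom a n k \<noteq> 0" using Pw0 by auto
  fix p :: nat assume p: "prime p"
  have "multiplicity p Pw = multiplicity p Pk + multiplicity p (a_binom a n k)"
    unfolding eq using Pk0 \<open>a_binom a n k \<noteq> 0\<close> p
    by (intro prime_elem_multiplicity_mult_distrib) (auto intro: prime_imp_prime_elem)
  thus "multiplicity p (a_binom a n k) =
          (\<Sum>t\<in>{1..vseq.NN (\<lambda>i. multiplicity p (a i)) n}. vseq.cc (\<lambda>i. multiplicity p (a i)) n k t)"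
    using mw[OF p] mk[OF p] win[OF p] by simp
qed


theorem theorem1:
  fixes a :: "nat \<Rightarrow> nat" and n :: nat
  assumes "strong_div_seq a"
  shows "Lcm {a_binom a n k | k. k \<le> n} = Lcm (a ` {1..n+1}) div a (n+1)"
proof -
  define B where "B = {a_binom a n k | k. k \<le> n}"
  define L where "L = Lcm (a ` {1..n+1})"
  have apos: "\<And>i. i \<ge> 1 \<Longrightarrow> a i \<noteq> 0" using assms unfolding strong_div_seq_def by auto
  have Beq: "B = (\<lambda>k. a_binom a n k) ` {..n}" unfolding B_def by auto
  have finB: "finite B" unfolding Beq by simp
  have B0: "0 \<notin> B" unfolding Beq using binom_props(1)[OF assms] by (metis atMost_iff imageE)
  have LB0: "Lcm B \<noteq> 0" using finB B0 by simp
  have L0: "L \<noteq> 0" unfolding L_def using apos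
    by (metis Lcm_0_iff_nat atLeastAtMost_iff finite_atLeastAtMost finite_imageI imageE)
  have aL: "\<And>m. m \<in> {1..n+1} \<Longrightarrow> a m dvd L" unfolding L_def by (rule dvd_Lcm) simp
  have an0: "a (n+1) \<noteq> 0" using apos by simp
  have anL: "a (n+1) dvd L" using aL by simp
  have 1: "Lcm B dvd L div a (n+1)"
  proof (rule Lcm_least)
    fix b assume "b \<in> B"
    then obtain k where k: "k \<le> n" and b: "b = a_binom a n k" unfolding B_def by auto
    have b0: "b \<noteq> 0" using binom_props(1)[OF assms k] b by simp
    have "b * a (n+1) dvd L"
    proof (rule multiplicity_le_imp_dvd)
      show "b * a (n+1) \<noteq> 0" using b0 an0 by simp
      fix p :: nat assume p: "prime p"
      interpret vseq "\<lambda>i. multiplicity p (a i)" n by (rule vseq_I[OF assms p])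
      obtain m where m: "m \<in> {1..n+1}"
        and le: "(\<Sum>t\<in>{1..NN}. cc k t) + multiplicity p (a (n+1)) \<le> multiplicity p (a m)"
        using part_i[OF k] by blast
      have "multiplicity p (b * a (n+1)) = multiplicity p b + multiplicity p (a (n+1))"
        using b0 an0 p by (intro prime_elem_multiplicity_mult_distrib) (auto intro: prime_imp_prime_elem)
      also have "\<dots> = (\<Sum>t\<in>{1..NN}. cc k t) + multiplicity p (a (n+1))"
        using binom_props(2)[OF assms k p] b by simp
      also have "\<dots> \<le> multiplicity p (a m)" by (rule le)
      also have "\<dots> \<le> multiplicity p L" by (rule dvd_imp_multiplicity_le[OF aL[OF m] L0])
      finally show "multiplicity p (b * a (n+1)) \<le> multiplicity p L" .
    qed
    thus "b dvd L div a (n+1)" using dvd_div_iff_mult[OF an0 anL] by simp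
  qed
  have "L dvd Lcm B * a (n+1)"
    unfolding L_def
  proof (rule Lcm_least)
    fix x assume "x \<in> a ` {1..n+1}"
    then obtain m where m: "m \<in> {1..n+1}" and x: "x = a m" by auto
    show "x dvd Lcm B * a (n+1)"
    proof (rule multiplicity_le_imp_dvd)
      show "x \<noteq> 0" using x m apos by simp
      fix p :: nat assume p: "prime p"
      interpret vseq "\<lambda>i. multiplicity p (a i)" n by (rule vseq_I[OF assms p])
      obtain k where k: "k \<le> n"
        and le: "multiplicity p (a m) \<le> multiplicity p (a (n+1)) + (\<Sum>t\<in>{1..NN}. cc k t)"
        using part_ii[OF m] by blast
      have kB: "a_binom a n k \<in> B" unfolding B_def using k by auto
      have "multiplicity p x \<le> multiplicity p (a (n+1)) + multiplicity p (a_binom a n k)"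
        using le x binom_props(2)[OF assms k p] by simp
      also have "\<dots> \<le> multiplicity p (a (n+1)) + multiplicity p (Lcm B)"
        using dvd_imp_multiplicity_le[OF dvd_Lcm[OF kB] LB0] by simp
      also have "\<dots> = multiplicity p (Lcm B * a (n+1))"
        using LB0 an0 p by (subst prime_elem_multiplicity_mult_distrib) (auto intro: prime_imp_prime_elem)
      finally show "multiplicity p x \<le> multiplicity p (Lcm B * a (n+1))" .
    qed
  qed
  hence 2: "L div a (n+1) dvd Lcm B" using div_dvd_iff_mult[OF an0 anL] by simp
  have "Lcm B = L div a (n+1)" using 1 2 by (rule dvd_antisym)
  thus ?thesis unfolding B_def L_def .
qed

end
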